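(* Let $H$, $L$ be as in the context and let $k$ be a positive integer. If there is a feasible solution $(S,\mathcal T_0)$ with $d(S,\mathcal T_0)\ge k$, then $L\ge L_{LB}$, where $L_{LB}$ is the smallest positive divisor of $Z$ satisfying $L_{LB}\ge k\cdot\omega(H)$.
   Context: Notation: $[n)=\{0,1,\dots,n-1\}$. Let $M,N,Z$ be positive integers and let $H$ be a binary $MZ\times NZ$ matrix made of $M\times N$ blocks, each a $Z\times Z$ circulant; assume $H$ has no zero row and no two identical rows. For $\mathcal A\subseteq[MZ)$, $H_{\mathcal A}$ is the submatrix of rows indexed by $\mathcal A$; $\omega(A)$ is the maximum Hamming weight of a column of $A$ ($\omega$ of the empty matrix is $0$). For $i\in[MZ)$ and integer $s$, $\pi^s(i)=Z\lfloor i/Z\rfloor+((i+s)\bmod Z)$ and $\pi^s(\mathcal T)=\{\pi^s(x):x\in\mathcal T\}$. Fix an integer $L>1$. A pair $(S,\mathcal T_0)$ ($S$ a positive integer, $\mathcal T_0\subseteq[MZ)$) is a feasible solution if, with $\mathcal T_l=\pi^{lS}(\mathcal T_0)$ for $l\in[L)$, the sets $\mathcal T_0,\dots,\mathcal T_{L-1}$ are pairwise disjoint with union $[MZ)$. The layer distance $d(S,\mathcal T_0)$ is the largest $l\in[L)$ such that the vertical stack of $H_{\mathcal T_0},\dots,H_{\mathcal T_{l-1}}$ has maximum column weight at most $1$. *)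

theory Defs
  imports Main
begin

text \<open>A binary MZ x NZ matrix is modelled as H :: nat => nat => bool, with
  rows r < M*Z and columns c < N*Z (values outside are irrelevant).\<close>

definition pi_shift :: "nat \<Rightarrow> nat \<Rightarrow> nat \<Rightarrow> nat" where
  "pi_shift Z s i = Z * (i div Z) + (i + s) mod Z"

text \<open>Each Z x Z block is circulant: shifting row and column index by one
  cyclically inside their blocks does not change the entry.\<close>
definition qc_matrix :: "nat \<Rightarrow> nat \<Rightarrow> nat \<Rightarrow> (nat \<Rightarrow> nat \<Rightarrow> bool) \<Rightarrow> bool" where
  "qc_matrix M N Z H \<longleftrightarrow>
     (\<forall>r < M*Z. \<forall>c < N*Z. H r c = H (pi_shift Z 1 r) (pi_shift Z 1 c))"

definition no_zero_row :: "nat \<Rightarrow> nat \<Rightarrow> nat \<Rightarrow> (nat \<Rightarrow> nat \<Rightarrow> bool) \<Rightarrow> bool" where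
  "no_zero_row M N Z H \<longleftrightarrow> (\<forall>r < M*Z. \<exists>c < N*Z. H r c)"

definition distinct_rows :: "nat \<Rightarrow> nat \<Rightarrow> nat \<Rightarrow> (nat \<Rightarrow> nat \<Rightarrow> bool) \<Rightarrow> bool" where
  "distinct_rows M N Z H \<longleftrightarrow>
     (\<forall>r < M*Z. \<forall>r' < M*Z. r \<noteq> r' \<longrightarrow> (\<exists>c < N*Z. H r c \<noteq> H r' c))"

definition omega :: "(nat \<Rightarrow> nat \<Rightarrow> bool) \<Rightarrow> nat set \<Rightarrow> nat \<Rightarrow> nat" where
  "omega H A n = Max ({0} \<union> (\<lambda>c. card {r \<in> A. H r c}) ` {..<n})"

definition layer :: "nat \<Rightarrow> nat \<Rightarrow> nat set \<Rightarrow> nat \<Rightarrow> nat set" where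
  "layer Z S T0 l = pi_shift Z (l * S) ` T0"

definition feasible :: "nat \<Rightarrow> nat \<Rightarrow> nat \<Rightarrow> nat \<Rightarrow> nat set \<Rightarrow> bool" where
  "feasible M Z L S T0 \<longleftrightarrow> S > 0 \<and> T0 \<subseteq> {..<M*Z} \<and>
     (\<forall>l < L. \<forall>l' < L. l \<noteq> l' \<longrightarrow> layer Z S T0 l \<inter> layer Z S T0 l' = {}) \<and>
     (\<Union>l<L. layer Z S T0 l) = {..<M*Z}"

definition stack_weight :: "(nat \<Rightarrow> nat \<Rightarrow> bool) \<Rightarrow> nat \<Rightarrow> nat \<Rightarrow> nat set \<Rightarrow> nat \<Rightarrow> nat \<Rightarrow> nat" where
  "stack_weight H Z S T0 l c = (\<Sum>j<l. card {r \<in> layer Z S T0 j. H r c})"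

definition layer_distance ::
  "(nat \<Rightarrow> nat \<Rightarrow> bool) \<Rightarrow> nat \<Rightarrow> nat \<Rightarrow> nat \<Rightarrow> nat \<Rightarrow> nat set \<Rightarrow> nat" where
  "layer_distance H N Z L S T0 =
     Max {l. l < L \<and> (\<forall>c < N*Z. stack_weight H Z S T0 l c \<le> 1)}"

end

theory Submission imports Defs begin

lemma ps_div: "Z > 0 \<Longrightarrow> pi_shift Z s i div Z = i div Z"
  by (simp add: pi_shift_def)

lemma ps_add: "Z > 0 \<Longrightarrow> pi_shift Z a (pi_shift Z b i) = pi_shift Z (a+b) i"
proof -
  assume Z: "Z > 0"
  let ?p = "pi_shift Z b i"
  have "(?p + a) mod Z = ((i+b) mod Z + a) mod Z" unfolding pi_shift_def
    by (simp add: add.assoc)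
  also have "\<dots> = (i + (a+b)) mod Z" by (metis mod_add_left_eq add.assoc add.commute)
  finally have m: "(?p + a) mod Z = (i + (a+b)) mod Z" .
  have "pi_shift Z a ?p = Z * (?p div Z) + (?p + a) mod Z" by (simp only: pi_shift_def)
  also have "\<dots> = Z * (i div Z) + (i + (a+b)) mod Z" using m ps_div[OF Z, of b i] by simp
  also have "\<dots> = pi_shift Z (a+b) i" by (simp only: pi_shift_def)
  finally show ?thesis .
qed

lemma ps_zero: "pi_shift Z 0 i = i"
  by (simp add: pi_shift_def)

lemma mod_rcancel: "(x + s) mod (Z::nat) = (y + s) mod Z \<Longrightarrow> x mod Z = y mod Z"
  using nat_mod_eq_iff by auto

lemma ps_inj: "Z > 0 \<Longrightarrow> inj (pi_shift Z s)"
proof (rule injI)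
  fix x y assume Z: "Z > 0" and e: "pi_shift Z s x = pi_shift Z s y"
  have d: "x div Z = y div Z" using ps_div[OF Z, of s x] ps_div[OF Z, of s y] e by simp
  have "(x + s) mod Z = (y + s) mod Z" using e d unfolding pi_shift_def by simp
  then have "x mod Z = y mod Z" using nat_mod_eq_iff by auto 
  then show "x = y" using d by (metis div_mult_mod_eq)
qed

lemma ps_lt: "Z > 0 \<Longrightarrow> i < M*Z \<Longrightarrow> pi_shift Z s i < M*Z"
proof -
  assume Z: "Z > 0" and i: "i < M*Z"
  have "pi_shift Z s i div Z < M" using ps_div[OF Z] i by (simp add: less_mult_imp_div_less)
  then show ?thesis using Z by (metis div_less_iff_less_mult)
qed

lemma ps_image: "Z > 0 \<Longrightarrow> pi_shift Z s ` {..<M*Z} = {..<M*Z}"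
  apply (rule endo_inj_surj)
  using ps_lt ps_inj by (auto intro: inj_on_subset[of _ UNIV])

lemma qc_iter: assumes "Z > 0" "qc_matrix M N Z H" "r < M*Z" "c < N*Z" "H r c"
  shows "H (pi_shift Z s r) (pi_shift Z s c)"
proof (induction s)
  case 0 then show ?case using assms by (simp add: ps_zero)
next
  case (Suc s)
  have "H (pi_shift Z 1 (pi_shift Z s r)) (pi_shift Z 1 (pi_shift Z s c))"
    using Suc assms ps_lt[OF assms(1)] unfolding qc_matrix_def by blast
  then show ?case using ps_add[OF assms(1)] by simp
qed


lemma layer_shift: "Z > 0 \<Longrightarrow> pi_shift Z (j*S) ` layer Z S T0 l = layer Z S T0 (l+j)"
  unfolding layer_def image_image by (simp add: ps_add add_mult_distrib add.commute)

lemma layer_0: "layer Z S T0 0 = T0"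
  unfolding layer_def by (simp add: ps_zero)

locale feas =
  fixes M Z L S :: nat and T0 :: "nat set"
  assumes Z: "Z > 0" and L: "L > 0" and f: "feasible M Z L S T0"
begin

abbreviation "T \<equiv> layer Z S T0"

lemma disj: "l < L \<Longrightarrow> l' < L \<Longrightarrow> l \<noteq> l' \<Longrightarrow> T l \<inter> T l' = {}"
  using f unfolding feasible_def by blast

lemma cover: "(\<Union>l<L. T l) = {..<M*Z}"
  using f unfolding feasible_def by blast

lemma sub: "l < L \<Longrightarrow> T l \<subseteq> {..<M*Z}"
  using cover by blast

lemma T_L: "T L = T 0"
proof -
  define V where "V = (\<Union>l\<in>{1..<L}. T l)"
  have split: "{..<L} = insert 0 {1..<L}" using L by auto
  have c0: "T 0 \<union> V = {..<M*Z}" using cover split V_def by auto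
  have d0: "T 0 \<inter> V = {}" unfolding V_def using disj[of 0] L by fastforce
  have "pi_shift Z S ` (\<Union>l<L. T l) = (\<Union>l<L. T (Suc l))"
    using layer_shift[OF Z, of 1 S T0] by (simp add: image_UN)
  also have "\<dots> = (\<Union>l\<in>{1..<Suc L}. T l)"
  proof -
    have "{1..<Suc L} = Suc ` {..<L}" by (simp add: image_Suc_lessThan atLeastLessThanSuc_atLeastAtMost)
    then show ?thesis by (simp add: image_image)
  qed
  also have "\<dots> = T L \<union> V"
  proof -
    have "{1..<Suc L} = insert L {1..<L}" using L by auto
    then show ?thesis unfolding V_def by simp
  qed
  finally have cL: "T L \<union> V = {..<M*Z}" using cover ps_image[OF Z] by simp
  have dL: "T L \<inter> V = {}"
  proof -
    { fix l assume l: "1 \<le> l" "l < L"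
      have inj: "inj (pi_shift Z S)" using ps_inj[OF Z] .
      have "T L \<inter> T l = pi_shift Z S ` T (L-1) \<inter> pi_shift Z S ` T (l-1)"
        using layer_shift[OF Z, of 1 S T0 "L-1"] layer_shift[OF Z, of 1 S T0 "l-1"] l by simp
      also have "\<dots> = pi_shift Z S ` (T (L-1) \<inter> T (l-1))"
        using inj by (simp add: image_Int)
      also have "\<dots> = {}" using disj[of "L-1" "l-1"] l by auto
      finally have "T L \<inter> T l = {}" . }
    then show ?thesis unfolding V_def by fastforce
  qed
  show ?thesis using c0 d0 cL dL by blast
qed

lemma T_mod: "T n = T (n mod L)"
proof (induction n rule: less_induct)
  case (less n)
  show ?case
  proof (cases "n < L")
    case True then show ?thesis by simp
  next
    case False
    then obtain m where m: "n = m + L" by (metis add.commute le_add_diff_inverse not_less)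
    have "T n = pi_shift Z (m*S) ` T L" using layer_shift[OF Z, of m S T0 L] m by (simp add: add.commute)
    also have "\<dots> = pi_shift Z (m*S) ` T 0" using T_L by simp
    also have "\<dots> = T m" using layer_shift[OF Z, of m S T0 0] by simp
    also have "\<dots> = T (m mod L)" using less m L by simp
    finally show ?thesis using m by simp
  qed
qed

lemma count_mod: assumes "d \<le> L" shows "card {j. j < L \<and> (m+j) mod L < d} = d"
proof -
  let ?f = "\<lambda>j. (m+j) mod L"
  have inj: "inj_on ?f {..<L}"
  proof (rule inj_onI)
    fix x y assume "x \<in> {..<L}" "y \<in> {..<L}" "?f x = ?f y"
    then have xy: "x < L" "y < L" "(x+m) mod L = (y+m) mod L" by (auto simp: add.commute)
    then have "x mod L = y mod L" using mod_rcancel by blast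
    then show "x = y" using xy by simp
  qed
  have im: "?f ` {..<L} = {..<L}"
    apply (rule endo_inj_surj) using inj L by auto
  have "?f ` {j. j < L \<and> (m+j) mod L < d} = {..<d}"
  proof
    show "?f ` {j. j < L \<and> (m+j) mod L < d} \<subseteq> {..<d}" by auto
    show "{..<d} \<subseteq> ?f ` {j. j < L \<and> (m+j) mod L < d}"
    proof
      fix i assume i: "i \<in> {..<d}"
      then have "i \<in> ?f ` {..<L}" using im assms by auto
      then obtain j where "j < L" "i = ?f j" by auto
      then show "i \<in> ?f ` {j. j < L \<and> (m+j) mod L < d}" using i by auto
    qed
  qed
  moreover have "inj_on ?f {j. j < L \<and> (m+j) mod L < d}"
    using inj by (rule inj_on_subset) auto
  ultimately show ?thesis by (metis card_image card_lessThan)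
qed

definition U :: "nat \<Rightarrow> nat set" where "U d = (\<Union>i<d. layer Z S T0 i)"

lemma row_count: assumes r: "r < M*Z" and d: "d \<le> L"
  shows "card {j. j < L \<and> pi_shift Z (j*S) r \<in> U d} = d"
proof -
  obtain m where m: "m < L" "r \<in> T m" using cover r by auto
  have "pi_shift Z (j*S) r \<in> U d \<longleftrightarrow> (m+j) mod L < d" for j
  proof -
    have inT: "pi_shift Z (j*S) r \<in> T ((m+j) mod L)"
      using layer_shift[OF Z, of j S T0 m] m T_mod[of "m+j"] by auto
    show ?thesis
    proof
      assume "pi_shift Z (j*S) r \<in> U d"
      then obtain i where i: "i < d" "pi_shift Z (j*S) r \<in> T i" unfolding U_def by auto
      then have "i = (m+j) mod L" using disj[of i "(m+j) mod L"] inT d L by fastforce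
      then show "(m+j) mod L < d" using i by simp
    next
      assume "(m+j) mod L < d" then show "pi_shift Z (j*S) r \<in> U d" using inT unfolding U_def by auto
    qed
  qed
  then have "{j. j < L \<and> pi_shift Z (j*S) r \<in> U d} = {j. j < L \<and> (m+j) mod L < d}" by auto
  then show ?thesis using count_mod[OF d] by simp
qed

lemma dvd: assumes M: "M > 0" shows "L dvd Z"
proof -
  let ?B = "{..<Z}"
  have pres: "x \<in> ?B \<longleftrightarrow> pi_shift Z s x \<in> ?B" for s x
    using ps_div[OF Z, of s x] Z by (metis div_eq_0_iff lessThan_iff not_gr_zero)
  have Tl: "T l \<inter> ?B = pi_shift Z (l*S) ` (T0 \<inter> ?B)" for l
    unfolding layer_def using pres by auto
  have cardl: "card (T l \<inter> ?B) = card (T0 \<inter> ?B)" for l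
    unfolding Tl using ps_inj[OF Z] by (simp add: card_image inj_on_subset[of _ UNIV])
  have "Z \<le> M*Z" using M by simp
  then have "?B \<subseteq> {..<M*Z}" by auto
  moreover have "(\<Union>l<L. T l \<inter> ?B) = (\<Union>l<L. T l) \<inter> ?B" by auto
  ultimately have BU: "?B = (\<Union>l<L. T l \<inter> ?B)" using cover by (simp add: Int_absorb1)
  have "card ?B = (\<Sum>l<L. card (T l \<inter> ?B))"
    apply (subst BU) apply (rule card_UN_disjoint) using disj by auto
  then have "Z = L * card (T0 \<inter> ?B)" using cardl by simp
  then show ?thesis by (metis dvd_triv_left)
qed

lemma card_filter_sum: "finite A \<Longrightarrow> card {x\<in>A. P x} = (\<Sum>x\<in>A. if P x then 1 else 0::nat)"
  by (simp add: sum.inter_filter[symmetric])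

lemma colbound:
  assumes qc: "qc_matrix M N Z H" and d: "d < L"
    and sw: "\<forall>c < N*Z. stack_weight H Z S T0 d c \<le> 1" and c: "c < N*Z"
  shows "d * card {r \<in> {..<M*Z}. H r c} \<le> L"
proof -
  define R where "R = {r \<in> {..<M*Z}. H r c}"
  define P where "P = (\<lambda>j r. pi_shift Z (j*S) r \<in> U d)"
  have fR: "finite R" unfolding R_def by simp
  have "d * card R = (\<Sum>r\<in>R. card {j\<in>{..<L}. P j r})"
    using row_count[of _ d] d unfolding R_def P_def by simp
  also have "\<dots> = (\<Sum>r\<in>R. \<Sum>j<L. if P j r then 1 else 0)"
    by (rule sum.cong[OF refl], rule card_filter_sum) simp
  also have "\<dots> = (\<Sum>j<L. \<Sum>r\<in>R. if P j r then 1 else 0)" by (rule sum.swap)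
  also have "\<dots> = (\<Sum>j<L. card {r\<in>R. P j r})" using fR by (simp add: card_filter_sum)
  also have "\<dots> \<le> (\<Sum>j<L. 1)"
  proof (rule sum_mono)
    fix j assume "j \<in> {..<L}"
    let ?c = "pi_shift Z (j*S) c"
    let ?f = "pi_shift Z (j*S)"
    have c': "?c < N*Z" using ps_lt[OF Z c] .
    define W where "W = (\<Union>i<d. {r \<in> T i. H r ?c})"
    have "W \<subseteq> {..<M*Z}" unfolding W_def
    proof (intro UN_least subsetI)
      fix i x assume "i \<in> {..<d}" "x \<in> {r \<in> T i. H r ?c}"
      then show "x \<in> {..<M*Z}" using sub[of i] d by auto
    qed
    then have fin: "finite W" by (rule finite_subset) simp
    have "card W \<le> (\<Sum>i<d. card {r \<in> T i. H r ?c})" unfolding W_def by (rule card_UN_le) simp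
    also have "\<dots> = stack_weight H Z S T0 d ?c" unfolding stack_weight_def by simp
    also have "\<dots> \<le> 1" using sw c' by blast
    finally have W1: "card W \<le> 1" .
    have "?f ` {r\<in>R. P j r} \<subseteq> W"
    proof
      fix x assume "x \<in> ?f ` {r\<in>R. P j r}"
      then obtain r where r: "r \<in> R" "P j r" "x = ?f r" by auto
      have "H x ?c" using qc_iter[OF Z qc _ c] r unfolding R_def by auto
      moreover obtain i where "i < d" "x \<in> T i" using r unfolding P_def U_def by auto
      ultimately show "x \<in> W" unfolding W_def by auto
    qed
    then have "card {r\<in>R. P j r} \<le> card W"
      using fin inj_on_subset[OF ps_inj[OF Z, of "j*S"], of "{r\<in>R. P j r}"] by (intro card_inj_on_le) auto
    then show "card {r\<in>R. P j r} \<le> 1" using W1 by simp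
  qed
  also have "\<dots> = L" by simp
  finally show ?thesis unfolding R_def .
qed

end


theorem corollary1:
  fixes M N Z L k S :: nat and H :: "nat \<Rightarrow> nat \<Rightarrow> bool" and T0 :: "nat set"
  assumes "M > 0" and "N > 0" and "Z > 0" and "L > 1" and "k > 0"
    and "qc_matrix M N Z H" and "no_zero_row M N Z H" and "distinct_rows M N Z H"
    and "feasible M Z L S T0"
    and "layer_distance H N Z L S T0 \<ge> k"
  shows "\<exists>LLB. LLB > 0 \<and> LLB dvd Z \<and> LLB \<ge> k * omega H {..<M*Z} (N*Z)
           \<and> (\<forall>D. D > 0 \<and> D dvd Z \<and> D \<ge> k * omega H {..<M*Z} (N*Z) \<longrightarrow> LLB \<le> D)
           \<and> L \<ge> LLB"
proof -
  interpret feas M Z L S T0 using assms by unfold_locales auto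
  have Ld: "L dvd Z" using dvd assms(1) .
  define Sset where "Sset = {l. l < L \<and> (\<forall>c < N*Z. stack_weight H Z S T0 l c \<le> 1)}"
  have "0 \<in> Sset" unfolding Sset_def stack_weight_def using assms(4) by simp
  moreover have "finite Sset" unfolding Sset_def by simp
  ultimately have "Max Sset \<in> Sset" by (intro Max_in) auto
  moreover have dd: "layer_distance H N Z L S T0 = Max Sset" unfolding layer_distance_def Sset_def ..
  ultimately obtain d where d: "d < L" "\<forall>c < N*Z. stack_weight H Z S T0 d c \<le> 1" "k \<le> d"
    using assms(10) unfolding Sset_def by auto
  define g where "g = (\<lambda>c. card {r \<in> {..<M*Z}. H r c})"
  define \<omega> where "\<omega> = omega H {..<M*Z} (N*Z)"
  have "\<omega> \<in> {0} \<union> g ` {..<N*Z}" unfolding \<omega>_def omega_def g_def by (intro Max_in) auto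
  then have kw: "k * \<omega> \<le> L"
  proof
    assume "\<omega> \<in> {0}" then show ?thesis by simp
  next
    assume "\<omega> \<in> g ` {..<N*Z}"
    then obtain c where c: "c < N*Z" "\<omega> = g c" by auto
    have "k * g c \<le> d * g c" using d by simp
    also have "\<dots> \<le> L" unfolding g_def using colbound[OF assms(6) d(1) d(2) c(1)] .
    finally show ?thesis using c by simp
  qed
  define Q where "Q = (\<lambda>D. D > 0 \<and> D dvd Z \<and> D \<ge> k * \<omega>)"
  have QL: "Q L" unfolding Q_def using Ld kw assms(4) by simp
  have "Q (LEAST D. Q D)" using QL by (rule LeastI)
  moreover have "\<forall>D. Q D \<longrightarrow> (LEAST D. Q D) \<le> D" by (auto intro: Least_le)
  moreover have "(LEAST D. Q D) \<le> L" using QL by (rule Least_le)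
  ultimately show ?thesis unfolding Q_def \<omega>_def by blast
qed

end
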